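(* Let $\mathcal{A}$ be a nice GFG-tNCW that is minimal, i.e., $|\mathcal{A}|\le|\mathcal{B}|$ for every GFG-tNCW $\mathcal{B}$ with $L(\mathcal{B})=L(\mathcal{A})$. Then $\mathcal{A}$ is safe-centralized and safe-minimal.
   Context: A tNCW (transition-based nondeterministic co-Büchi word automaton) is $\mathcal{A}=\langle\Sigma,Q,q_0,\delta,\alpha\rangle$, where $\Sigma$ is a finite alphabet, $Q$ a finite set of states, $q_0\in Q$ the initial state, $\delta:Q\times\Sigma\to 2^Q\setminus\{\emptyset\}$ the transition function, with induced transition relation $\Delta=\{\langle q,\sigma,s\rangle: s\in\delta(q,\sigma)\}$, and $\alpha\subseteq\Delta$. The size $|\mathcal{A}|$ is $|Q|$. Transitions in $\alpha$ are $\alpha$-transitions, those in $\Delta\setminus\alpha$ are $\bar\alpha$-transitions; $\delta^{\alpha}(q,\sigma)=\{s:\langle q,\sigma,s\rangle\in\alpha\}$ and $\delta^{\bar\alpha}(q,\sigma)=\{s:\langle q,\sigma,s\rangle\in\Delta\setminus\alpha\}$. A run on $w=\sigma_1\sigma_2\cdots$ is $r_0r_1\cdots$ with $r_0=q_0$ and $r_{i+1}\in\delta(r_i,\sigma_{i+1})$; it is accepting iff it traverses $\alpha$-transitions only finitely often; $L(\mathcal{A})$ is the set of words with an accepting run. $\mathcal{A}^q$ is $\mathcal{A}$ with initial state $q$. States $q,s$ are equivalent, $q\sim s$, if $L(\mathcal{A}^q)=L(\mathcal{A}^s)$. $\mathcal{A}$ is GFG if there is $f:\Sigma^*\to Q$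 with $f(\epsilon)=q_0$, $\langle f(u),\sigma,f(u\sigma)\rangle\in\Delta$ for all $u\in\Sigma^*,\sigma\in\Sigma$, and such that for every $w\in L(\mathcal{A})$ the run $f(w[1,0]),f(w[1,1]),f(w[1,2]),\dots$ is accepting (where $w[1,i]$ is the length-$i$ prefix). A state $q$ is GFG if $\mathcal{A}^q$ is GFG. $\mathcal{A}$ is semantically deterministic if for all $q,\sigma$, all states in $\delta(q,\sigma)$ are pairwise equivalent; safe deterministic if $|\delta^{\bar\alpha}(q,\sigma)|\le 1$ for all $q,\sigma$. The safe components of $\mathcal{A}$ are the strongly connected components of the graph on $Q$ with an edge $q\to q'$ iff $q'\in\delta^{\bar\alpha}(q,\sigma)$ for some $\sigma$. $\mathcal{A}$ is normal if whenever there is a path of $\bar\alpha$-transitions from $q$ to $s$, there is also one from $s$ to $q$. $\mathcal{A}$ is nice if all its states are reachable from $q_0$ and GFG, and $\mathcal{A}$ is normal, safe deterministic and semantically deterministic. A run is safe if it traverses no $\alpha$-transition; $L_{safe}(\mathcal{A}^q)$ is the set of infinite words having a safe run from $q$. Write $q\approx s$ if $q\sim s$ and $L_{safe}(\mathcal{A}^q)=L_{safe}(\mathcal{A}^s)$, and $q\precsim s$ if $q\sim s$ and $L_{safe}(\mathcal{A}^q)\subseteq L_{safe}(\mathcal{A}^s)$. $\mathcal{A}$ is safe-minimal if it has no two distinct states $q\approx s$; safe-centralized if $q\precsim s$ implies that $q$ and $s$ lie in the same safe component. *)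

theory Defs
  imports Main
begin

text \<open>A tNCW over alphabet alph, with state set states, initial state init,
  transition function trans and set of alpha-transitions acc.\<close>
record ('q, 'a) tncw =
  alph   :: "'a set"
  states :: "'q set"
  init   :: 'q
  trans  :: "'q \<Rightarrow> 'a \<Rightarrow> 'q set"
  acc    :: "('q \<times> 'a \<times> 'q) set"

definition Delta :: "('q, 'a) tncw \<Rightarrow> ('q \<times> 'a \<times> 'q) set" where
  "Delta A = {(q, \<sigma>, s). q \<in> states A \<and> \<sigma> \<in> alph A \<and> s \<in> trans A q \<sigma>}"

definition wf_tncw :: "('q, 'a) tncw \<Rightarrow> bool" where
  "wf_tncw A \<longleftrightarrow> finite (alph A) \<and> finite (states A) \<and> init A \<in> states A
     \<and> (\<forall>q\<in>states A. \<forall>\<sigma>\<in>alph A. trans A q \<sigma> \<subseteq> states A \<and> trans A q \<sigma> \<noteq> {})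
     \<and> acc A \<subseteq> Delta A"

definition trans_acc :: "('q, 'a) tncw \<Rightarrow> 'q \<Rightarrow> 'a \<Rightarrow> 'q set" where
  "trans_acc A q \<sigma> = {s. (q, \<sigma>, s) \<in> acc A}"

definition trans_nacc :: "('q, 'a) tncw \<Rightarrow> 'q \<Rightarrow> 'a \<Rightarrow> 'q set" where
  "trans_nacc A q \<sigma> = {s. (q, \<sigma>, s) \<in> Delta A - acc A}"

definition iwords :: "'a set \<Rightarrow> (nat \<Rightarrow> 'a) set" where
  "iwords S = {w. \<forall>i. w i \<in> S}"

definition is_run_from :: "('q, 'a) tncw \<Rightarrow> 'q \<Rightarrow> (nat \<Rightarrow> 'a) \<Rightarrow> (nat \<Rightarrow> 'q) \<Rightarrow> bool" where
  "is_run_from A q w r \<longleftrightarrow> r 0 = q \<and> (\<forall>i. r (Suc i) \<in> trans A (r i) (w i))"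

definition accepting_run :: "('q, 'a) tncw \<Rightarrow> (nat \<Rightarrow> 'a) \<Rightarrow> (nat \<Rightarrow> 'q) \<Rightarrow> bool" where
  "accepting_run A w r \<longleftrightarrow> finite {i. (r i, w i, r (Suc i)) \<in> acc A}"

definition safe_run :: "('q, 'a) tncw \<Rightarrow> (nat \<Rightarrow> 'a) \<Rightarrow> (nat \<Rightarrow> 'q) \<Rightarrow> bool" where
  "safe_run A w r \<longleftrightarrow> (\<forall>i. (r i, w i, r (Suc i)) \<notin> acc A)"

definition lang :: "('q, 'a) tncw \<Rightarrow> (nat \<Rightarrow> 'a) set" where
  "lang A = {w \<in> iwords (alph A). \<exists>r. is_run_from A (init A) w r \<and> accepting_run A w r}"

definition lang_from :: "('q, 'a) tncw \<Rightarrow> 'q \<Rightarrow> (nat \<Rightarrow> 'a) set" where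
  "lang_from A q = lang (A\<lparr>init := q\<rparr>)"

definition safe_lang_from :: "('q, 'a) tncw \<Rightarrow> 'q \<Rightarrow> (nat \<Rightarrow> 'a) set" where
  "safe_lang_from A q = {w \<in> iwords (alph A). \<exists>r. is_run_from A q w r \<and> safe_run A w r}"

definition prefix :: "(nat \<Rightarrow> 'a) \<Rightarrow> nat \<Rightarrow> 'a list" where
  "prefix w i = map w [0..<i]"

definition is_gfg :: "('q, 'a) tncw \<Rightarrow> bool" where
  "is_gfg A \<longleftrightarrow> (\<exists>f :: 'a list \<Rightarrow> 'q.
      f [] = init A
    \<and> (\<forall>u \<in> lists (alph A). \<forall>\<sigma> \<in> alph A. (f u, \<sigma>, f (u @ [\<sigma>])) \<in> Delta A)
    \<and> (\<forall>w \<in> lang A. accepting_run A w (\<lambda>i. f (prefix w i))))"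

definition gfg_state :: "('q, 'a) tncw \<Rightarrow> 'q \<Rightarrow> bool" where
  "gfg_state A q \<longleftrightarrow> is_gfg (A\<lparr>init := q\<rparr>)"

definition equiv_states :: "('q, 'a) tncw \<Rightarrow> 'q \<Rightarrow> 'q \<Rightarrow> bool" where
  "equiv_states A q s \<longleftrightarrow> lang_from A q = lang_from A s"

definition sem_det :: "('q, 'a) tncw \<Rightarrow> bool" where
  "sem_det A \<longleftrightarrow> (\<forall>q\<in>states A. \<forall>\<sigma>\<in>alph A. \<forall>s1\<in>trans A q \<sigma>. \<forall>s2\<in>trans A q \<sigma>.
      equiv_states A s1 s2)"

definition safe_det :: "('q, 'a) tncw \<Rightarrow> bool" where
  "safe_det A \<longleftrightarrow> (\<forall>q\<in>states A. \<forall>\<sigma>\<in>alph A. card (trans_nacc A q \<sigma>) \<le> 1)"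

definition safe_edges :: "('q, 'a) tncw \<Rightarrow> ('q \<times> 'q) set" where
  "safe_edges A = {(q, q'). \<exists>\<sigma>. (q, \<sigma>, q') \<in> Delta A - acc A}"

definition all_edges :: "('q, 'a) tncw \<Rightarrow> ('q \<times> 'q) set" where
  "all_edges A = {(q, q'). \<exists>\<sigma>. (q, \<sigma>, q') \<in> Delta A}"

definition same_safe_comp :: "('q, 'a) tncw \<Rightarrow> 'q \<Rightarrow> 'q \<Rightarrow> bool" where
  "same_safe_comp A q s \<longleftrightarrow> (q, s) \<in> (safe_edges A)\<^sup>* \<and> (s, q) \<in> (safe_edges A)\<^sup>*"

definition normal :: "('q, 'a) tncw \<Rightarrow> bool" where
  "normal A \<longleftrightarrow> (\<forall>q\<in>states A. \<forall>s\<in>states A.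
      (q, s) \<in> (safe_edges A)\<^sup>* \<longrightarrow> (s, q) \<in> (safe_edges A)\<^sup>*)"

definition nice :: "('q, 'a) tncw \<Rightarrow> bool" where
  "nice A \<longleftrightarrow> (\<forall>q\<in>states A. (init A, q) \<in> (all_edges A)\<^sup>*)
     \<and> (\<forall>q\<in>states A. gfg_state A q)
     \<and> normal A \<and> safe_det A \<and> sem_det A"

definition safe_equiv :: "('q, 'a) tncw \<Rightarrow> 'q \<Rightarrow> 'q \<Rightarrow> bool" where
  "safe_equiv A q s \<longleftrightarrow> equiv_states A q s \<and> safe_lang_from A q = safe_lang_from A s"

definition safe_le :: "('q, 'a) tncw \<Rightarrow> 'q \<Rightarrow> 'q \<Rightarrow> bool" where
  "safe_le A q s \<longleftrightarrow> equiv_states A q s \<and> safe_lang_from A q \<subseteq> safe_lang_from A s"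

definition safe_minimal :: "('q, 'a) tncw \<Rightarrow> bool" where
  "safe_minimal A \<longleftrightarrow> (\<forall>q\<in>states A. \<forall>s\<in>states A. safe_equiv A q s \<longrightarrow> q = s)"

definition safe_centralized :: "('q, 'a) tncw \<Rightarrow> bool" where
  "safe_centralized A \<longleftrightarrow> (\<forall>q\<in>states A. \<forall>s\<in>states A. safe_le A q s \<longrightarrow> same_safe_comp A q s)"

text \<open>Minimality among all GFG-tNCWs over the same alphabet recognizing the same language.
  Competitors have states drawn from nat; every finite state set can be renamed into nat.\<close>
definition minimal_gfg :: "('q, 'a) tncw \<Rightarrow> bool" where
  "minimal_gfg A \<longleftrightarrow> (\<forall>B :: (nat, 'a) tncw. wf_tncw B \<and> alph B = alph A \<and> is_gfg B
      \<and> lang B = lang A \<longrightarrow> card (states A) \<le> card (states B))"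

end

theory Submission
  imports Defs
begin



definition sfx :: "(nat \<Rightarrow> 'a) \<Rightarrow> nat \<Rightarrow> (nat \<Rightarrow> 'a)" where
  "sfx w k = (\<lambda>i. w (k + i))"

lemma sfx_0[simp]: "sfx w 0 = w" by (simp add: sfx_def)

lemma sfx_app: "sfx w k i = w (k + i)" by (simp add: sfx_def)
declare sfx_app[simp]

lemma sfx_cons: "sfx w k = case_nat (w k) (sfx w (Suc k))"
  by (rule ext) (simp add: sfx_def split: nat.split)

lemma iwords_sfx: "w \<in> iwords S \<Longrightarrow> sfx w k \<in> iwords S"
  by (simp add: iwords_def)

lemma iwords_cons: "\<sigma> \<in> S \<Longrightarrow> v \<in> iwords S \<Longrightarrow> case_nat \<sigma> v \<in> iwords S"
  by (simp add: iwords_def split: nat.split)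

lemma Delta_upd[simp]: "Delta (A\<lparr>init := q\<rparr>) = Delta A"
  by (simp add: Delta_def)

lemma lang_from_iff: "w \<in> lang_from A q \<longleftrightarrow> w \<in> iwords (alph A) \<and> (\<exists>r. is_run_from A q w r \<and> accepting_run A w r)"
  by (simp add: lang_from_def lang_def is_run_from_def accepting_run_def)

lemma lang_eq: "lang A = lang_from A (init A)"
  by (simp add: lang_from_def)

lemma run_in_states:
  assumes "wf_tncw A" "q \<in> states A" "w \<in> iwords (alph A)" "is_run_from A q w r"
  shows "r i \<in> states A"
proof (induction i)
  case 0 then show ?case using assms by (simp add: is_run_from_def)
next
  case (Suc i)
  have "w i \<in> alph A" using assms(3) by (simp add: iwords_def)
  then show ?case using Suc assms(1,4) unfolding wf_tncw_def is_run_from_def by blast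
qed

lemma run_Delta:
  assumes "wf_tncw A" "q \<in> states A" "w \<in> iwords (alph A)" "is_run_from A q w r"
  shows "(r i, w i, r (Suc i)) \<in> Delta A"
proof -
  have "w i \<in> alph A" using assms(3) by (simp add: iwords_def)
  then show ?thesis using run_in_states[OF assms, of i] assms(4) by (simp add: Delta_def is_run_from_def)
qed

lemma lang_prepend:
  assumes "t \<in> trans A p \<sigma>" "\<sigma> \<in> alph A" "v \<in> lang_from A t"
  shows "case_nat \<sigma> v \<in> lang_from A p"
proof -
  obtain r where r: "is_run_from A t v r" "accepting_run A v r" "v \<in> iwords (alph A)"
    using assms(3) by (auto simp: lang_from_iff)
  define r' where "r' = case_nat p r"
  have "is_run_from A p (case_nat \<sigma> v) r'"
    using r(1) assms(1) by (auto simp: is_run_from_def r'_def split: nat.split)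
  moreover have "{i. (r' i, case_nat \<sigma> v i, r' (Suc i)) \<in> acc A}
      \<subseteq> insert 0 (Suc ` {i. (r i, v i, r (Suc i)) \<in> acc A})"
  proof
    fix i assume "i \<in> {i. (r' i, case_nat \<sigma> v i, r' (Suc i)) \<in> acc A}"
    then show "i \<in> insert 0 (Suc ` {i. (r i, v i, r (Suc i)) \<in> acc A})"
      by (cases i) (auto simp: r'_def)
  qed
  then have "accepting_run A (case_nat \<sigma> v) r'"
    using r(2) unfolding accepting_run_def by (meson finite_imageI finite_insert finite_subset)
  ultimately show ?thesis using iwords_cons[OF assms(2) r(3)] by (auto simp: lang_from_iff)
qed

lemma lang_drop:
  assumes "is_run_from A p w r" "accepting_run A w r" "w \<in> iwords (alph A)"
  shows "sfx w k \<in> lang_from A (r k)"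
proof -
  define r' where "r' = (\<lambda>i. r (k + i))"
  have "is_run_from A (r k) (sfx w k) r'" using assms(1) by (simp add: is_run_from_def r'_def)
  moreover have "{i. (r' i, sfx w k i, r' (Suc i)) \<in> acc A} = (\<lambda>i. i - k) ` ({i. (r i, w i, r (Suc i)) \<in> acc A} \<inter> {k..})"
  proof (rule set_eqI, rule iffI)
    fix i assume "i \<in> {i. (r' i, sfx w k i, r' (Suc i)) \<in> acc A}"
    then show "i \<in> (\<lambda>i. i - k) ` ({i. (r i, w i, r (Suc i)) \<in> acc A} \<inter> {k..})"
      by (auto simp: r'_def intro!: image_eqI[where x="k+i"])
  qed (auto simp: r'_def)
  then have "accepting_run A (sfx w k) r'" using assms(2) by (simp add: accepting_run_def)
  ultimately show ?thesis using iwords_sfx[OF assms(3)] by (auto simp: lang_from_iff)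
qed

lemma lang_from_drop1:
  assumes "case_nat \<sigma> v \<in> lang_from A p"
  shows "\<exists>t\<in>trans A p \<sigma>. v \<in> lang_from A t"
proof -
  obtain r where r: "is_run_from A p (case_nat \<sigma> v) r" "accepting_run A (case_nat \<sigma> v) r" "case_nat \<sigma> v \<in> iwords (alph A)"
    using assms by (auto simp: lang_from_iff)
  have "sfx (case_nat \<sigma> v) 1 \<in> lang_from A (r 1)" by (rule lang_drop[OF r])
  moreover have "sfx (case_nat \<sigma> v) 1 = v" by (rule ext) simp
  moreover have "r 1 \<in> trans A p \<sigma>" using r(1) unfolding is_run_from_def
    by (metis One_nat_def old.nat.simps(4))
  ultimately show ?thesis by auto
qed

lemma safe_lang_prepend:
  assumes "(p, \<sigma>, t) \<in> Delta A - acc A" "v \<in> safe_lang_from A t"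
  shows "case_nat \<sigma> v \<in> safe_lang_from A p"
proof -
  obtain r where r: "is_run_from A t v r" "safe_run A v r" "v \<in> iwords (alph A)"
    using assms(2) by (auto simp: safe_lang_from_def)
  define r' where "r' = case_nat p r"
  have "is_run_from A p (case_nat \<sigma> v) r'"
    using r(1) assms(1) by (auto simp: is_run_from_def r'_def Delta_def split: nat.split)
  moreover have "safe_run A (case_nat \<sigma> v) r'"
    using r(1,2) assms(1) by (auto simp: safe_run_def is_run_from_def r'_def split: nat.split)
  moreover have "\<sigma> \<in> alph A" using assms(1) by (auto simp: Delta_def)
  ultimately show ?thesis using iwords_cons[OF _ r(3)] by (auto simp: safe_lang_from_def)
qed

lemma safe_lang_drop:
  assumes "is_run_from A p w r" "safe_run A w r" "w \<in> iwords (alph A)"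
  shows "sfx w k \<in> safe_lang_from A (r k)"
proof -
  define r' where "r' = (\<lambda>i. r (k + i))"
  have "is_run_from A (r k) (sfx w k) r'" using assms(1) by (simp add: is_run_from_def r'_def)
  moreover have "safe_run A (sfx w k) r'" using assms(2) by (simp add: safe_run_def r'_def)
  ultimately show ?thesis using iwords_sfx[OF assms(3)] by (auto simp: safe_lang_from_def)
qed

lemma safe_sub_lang: "safe_lang_from A p \<subseteq> lang_from A p"
proof
  fix w assume "w \<in> safe_lang_from A p"
  then obtain r where "w \<in> iwords (alph A)" "is_run_from A p w r" "safe_run A w r"
    by (auto simp: safe_lang_from_def)
  moreover have "accepting_run A w r" using \<open>safe_run A w r\<close>
    by (simp add: safe_run_def accepting_run_def)
  ultimately show "w \<in> lang_from A p" by (auto simp: lang_from_iff)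
qed




lemma safe_unique:
  assumes "wf_tncw A" "safe_det A" "(q, \<sigma>, a) \<in> Delta A - acc A" "(q, \<sigma>, b) \<in> Delta A - acc A"
  shows "a = b"
proof -
  have q: "q \<in> states A" "\<sigma> \<in> alph A" using assms(3) by (auto simp: Delta_def)
  have "trans_nacc A q \<sigma> \<subseteq> states A" using assms(1) q unfolding trans_nacc_def wf_tncw_def Delta_def by auto
  then have fin: "finite (trans_nacc A q \<sigma>)" using assms(1) unfolding wf_tncw_def by (meson finite_subset)
  have "card (trans_nacc A q \<sigma>) \<le> Suc 0" using assms(2) q unfolding safe_det_def by auto
  then have "\<forall>x\<in>trans_nacc A q \<sigma>. \<forall>y\<in>trans_nacc A q \<sigma>. x = y" using card_le_Suc0_iff_eq[OF fin] by blast
  then show ?thesis using assms(3,4) by (auto simp: trans_nacc_def)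
qed

lemma res_sub:
  assumes "sem_det A" "p' \<in> states A" "lang_from A p = lang_from A p'" "\<sigma> \<in> alph A"
    "t \<in> trans A p \<sigma>" "t' \<in> trans A p' \<sigma>"
  shows "lang_from A t \<subseteq> lang_from A t'"
proof
  fix v assume "v \<in> lang_from A t"
  then have "case_nat \<sigma> v \<in> lang_from A p'" using lang_prepend[OF assms(5,4)] assms(3) by auto
  then have "\<exists>t\<in>trans A p' \<sigma>. v \<in> lang_from A t" by (rule lang_from_drop1)
  then obtain t'' where "t'' \<in> trans A p' \<sigma>" "v \<in> lang_from A t''" by blast
  moreover have "equiv_states A t'' t'" using assms(1,2,4,6) \<open>t'' \<in> trans A p' \<sigma>\<close>
    unfolding sem_det_def by blast
  ultimately show "v \<in> lang_from A t'" by (simp add: equiv_states_def)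
qed

lemma res_equiv:
  assumes "sem_det A" "p \<in> states A" "p' \<in> states A" "equiv_states A p p'" "\<sigma> \<in> alph A"
    "t \<in> trans A p \<sigma>" "t' \<in> trans A p' \<sigma>"
  shows "equiv_states A t t'"
  using res_sub[OF assms(1,3) _ assms(5,6,7)] res_sub[OF assms(1,2) _ assms(5,7,6)] assms(4)
  unfolding equiv_states_def by auto

lemma safe_closed_nonempty:
  assumes "\<forall>y\<in>C. \<exists>\<sigma> z. (y, \<sigma>, z) \<in> Delta A - acc A \<and> z \<in> C" "y0 \<in> C"
  shows "safe_lang_from A y0 \<noteq> {}"
proof -
  define P where "P y p \<longleftrightarrow> (y, fst p, snd p) \<in> Delta A - acc A \<and> snd p \<in> C" for y p
  define nx where "nx y = (SOME p. P y p)" for y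
  have nx: "(y, fst (nx y), snd (nx y)) \<in> Delta A - acc A \<and> snd (nx y) \<in> C" if yC: "y \<in> C" for y
  proof -
    obtain \<sigma> z where "(y, \<sigma>, z) \<in> Delta A - acc A" "z \<in> C" using bspec[OF assms(1) yC] by blast
    then have "P y (\<sigma>, z)" by (simp add: P_def)
    then have "P y (nx y)" unfolding nx_def by (rule someI)
    then show ?thesis by (simp add: P_def)
  qed
  define r where "r i = ((snd \<circ> nx) ^^ i) y0" for i
  have rS: "r (Suc i) = snd (nx (r i))" for i by (simp add: r_def)
  have rC: "r i \<in> C" for i
  proof (induction i)
    case 0 then show ?case using assms(2) by (simp add: r_def)
  next
    case (Suc i) then show ?case unfolding rS using nx by blast
  qed
  define w where "w i = fst (nx (r i))" for i
  have D: "(r i, w i, r (Suc i)) \<in> Delta A - acc A" for i using nx[OF rC[of i]] by (simp add: w_def rS)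
  have "w \<in> iwords (alph A)" unfolding iwords_def
  proof (intro CollectI allI)
    fix i show "w i \<in> alph A" using D[of i] unfolding Delta_def by blast
  qed
  moreover have "is_run_from A y0 w r" unfolding is_run_from_def
  proof (intro conjI allI)
    show "r 0 = y0" by (simp add: r_def)
    fix i show "r (Suc i) \<in> trans A (r i) (w i)" using D[of i] unfolding Delta_def by blast
  qed
  moreover have "safe_run A w r" unfolding safe_run_def using D by blast
  ultimately have "w \<in> safe_lang_from A y0" unfolding safe_lang_from_def by blast
  then show ?thesis by blast
qed

lemma safe_edge_nonempty:
  assumes "wf_tncw A" "normal A" "(x, \<sigma>, x') \<in> Delta A - acc A" "y \<in> {x, x'}"
  shows "safe_lang_from A y \<noteq> {}"
proof -
  let ?S = "safe_edges A"
  have xx': "(x, x') \<in> ?S" using assms(3) by (auto simp: safe_edges_def)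
  have Q: "x \<in> states A" "x' \<in> states A" using assms(3,1) by (auto simp: Delta_def wf_tncw_def)
  have bk: "(x', x) \<in> ?S\<^sup>*" using assms(2) Q xx' unfolding normal_def by blast
  define C where "C = {y. (x, y) \<in> ?S\<^sup>* \<and> (y, x) \<in> ?S\<^sup>*}"
  have "\<forall>y\<in>C. \<exists>\<sigma> z. (y, \<sigma>, z) \<in> Delta A - acc A \<and> z \<in> C"
  proof
    fix y assume "y \<in> C"
    then have yx: "(x, y) \<in> ?S\<^sup>*" "(y, x) \<in> ?S\<^sup>*" by (auto simp: C_def)
    then have "(y, x') \<in> ?S\<^sup>+" using xx' by auto
    then obtain z where yz: "(y, z) \<in> ?S" "(z, x') \<in> ?S\<^sup>*" by (meson tranclD)
    have "(x, z) \<in> ?S\<^sup>*" using yx(1) yz(1) by auto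
    moreover have "(z, x) \<in> ?S\<^sup>*" using yz(2) bk by auto
    ultimately have "z \<in> C" by (auto simp: C_def)
    then show "\<exists>\<sigma> z. (y, \<sigma>, z) \<in> Delta A - acc A \<and> z \<in> C" using yz(1) by (auto simp: safe_edges_def)
  qed
  moreover have "y \<in> C" using assms(4) bk xx' by (auto simp: C_def)
  ultimately show ?thesis by (rule safe_closed_nonempty)
qed

lemma step_safe:
  assumes "wf_tncw A" "safe_det A" "sy \<in> states A"
    "safe_lang_from A y \<subseteq> safe_lang_from A sy" "(y, \<sigma>, x) \<in> Delta A - acc A"
    "safe_lang_from A x \<noteq> {}"
  shows "\<exists>sx. (sy, \<sigma>, sx) \<in> Delta A - acc A \<and> safe_lang_from A x \<subseteq> safe_lang_from A sx"
proof -
  have sig: "\<sigma> \<in> alph A" using assms(5) by (auto simp: Delta_def)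
  have first: "\<exists>sx. (sy, \<sigma>, sx) \<in> Delta A - acc A \<and> v \<in> safe_lang_from A sx"
    if "v \<in> safe_lang_from A x" for v
  proof -
    have "case_nat \<sigma> v \<in> safe_lang_from A sy" using safe_lang_prepend[OF assms(5) that] assms(4) by auto
    then obtain r where r: "is_run_from A sy (case_nat \<sigma> v) r" "safe_run A (case_nat \<sigma> v) r"
       "case_nat \<sigma> v \<in> iwords (alph A)" by (auto simp: safe_lang_from_def)
    have "sfx (case_nat \<sigma> v) 1 \<in> safe_lang_from A (r 1)" by (rule safe_lang_drop[OF r])
    moreover have "sfx (case_nat \<sigma> v) 1 = v" by (rule ext) simp
    moreover have "r 1 \<in> trans A sy \<sigma>" "(sy, \<sigma>, r 1) \<notin> acc A" using r(1,2) unfolding is_run_from_def safe_run_def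
      by (metis One_nat_def old.nat.simps(4))+
    ultimately show ?thesis using assms(3) sig by (auto simp: Delta_def)
  qed
  obtain v0 where "v0 \<in> safe_lang_from A x" using assms(6) by auto
  then obtain sx where sx: "(sy, \<sigma>, sx) \<in> Delta A - acc A" using first by blast
  have "safe_lang_from A x \<subseteq> safe_lang_from A sx"
  proof
    fix v assume "v \<in> safe_lang_from A x"
    then obtain sx' where "(sy, \<sigma>, sx') \<in> Delta A - acc A" "v \<in> safe_lang_from A sx'" using first by blast
    moreover have "sx' = sx" using safe_unique[OF assms(1,2)] sx calculation(1) by blast
    ultimately show "v \<in> safe_lang_from A sx" by simp
  qed
  then show ?thesis using sx by blast
qed

lemma cong_safe:
  assumes "wf_tncw A" "nice A" "x \<in> states A" "y \<in> states A" "safe_equiv A x y"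
    "(x, \<sigma>, x') \<in> Delta A - acc A"
  shows "\<exists>y'. (y, \<sigma>, y') \<in> Delta A - acc A \<and> safe_equiv A x' y'"
proof -
  have n: "normal A" "safe_det A" "sem_det A" using assms(2) by (auto simp: nice_def)
  have ne: "safe_lang_from A x' \<noteq> {}" using safe_edge_nonempty[OF assms(1) n(1) assms(6)] by auto
  obtain y' where y': "(y, \<sigma>, y') \<in> Delta A - acc A" "safe_lang_from A x' \<subseteq> safe_lang_from A y'"
    using step_safe[OF assms(1) n(2) assms(4) _ assms(6) ne] assms(5) unfolding safe_equiv_def by blast
  have ne': "safe_lang_from A y' \<noteq> {}" using safe_edge_nonempty[OF assms(1) n(1) y'(1)] by auto
  obtain x'' where x'': "(x, \<sigma>, x'') \<in> Delta A - acc A" "safe_lang_from A y' \<subseteq> safe_lang_from A x''"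
    using step_safe[OF assms(1) n(2) assms(3) _ y'(1) ne'] assms(5) unfolding safe_equiv_def by blast
  have "x'' = x'" using safe_unique[OF assms(1) n(2) x''(1) assms(6)] .
  moreover have "equiv_states A x' y'"
    using res_equiv[OF n(3) assms(3,4)] assms(5,6) y'(1) unfolding safe_equiv_def Delta_def by auto
  ultimately show ?thesis using y' x'' unfolding safe_equiv_def by auto
qed

declare sfx_app[simp del]




definition redA :: "('q, 'a) tncw \<Rightarrow> 'q set \<Rightarrow> ('q \<Rightarrow> 'q) \<Rightarrow> ('q, 'a) tncw" where
  "redA A R h = \<lparr>alph = alph A, states = R, init = h (init A),
     trans = (\<lambda>p \<sigma>. {p' \<in> R. \<exists>t \<in> trans A p \<sigma>. equiv_states A t p'}),
     acc = {(p, \<sigma>, p'). p \<in> R \<and> \<sigma> \<in> alph A \<and> p' \<in> R \<and> (\<exists>t \<in> trans A p \<sigma>. equiv_states A t p')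
              \<and> p' \<notin> h ` trans_nacc A p \<sigma>}\<rparr>"

primrec gstr :: "('q, 'a) tncw \<Rightarrow> ('q \<Rightarrow> 'q) \<Rightarrow> ('a list \<Rightarrow> 'q) \<Rightarrow> 'a list \<Rightarrow> 'q" where
  "gstr A h f [] = h (init A)"
| "gstr A h f (\<sigma> # ru) = (if h ` trans_nacc A (gstr A h f ru) \<sigma> \<noteq> {}
      then (SOME x. x \<in> h ` trans_nacc A (gstr A h f ru) \<sigma>) else h (f (rev ru @ [\<sigma>])))"

lemma accepting_run_upd[simp]: "accepting_run (A\<lparr>init := q\<rparr>) w r = accepting_run A w r"
  by (simp add: accepting_run_def)

lemma prefix_Suc: "prefix w (Suc i) = prefix w i @ [w i]"
  by (simp add: prefix_def)

lemma prefix_lists: "w \<in> iwords S \<Longrightarrow> prefix w i \<in> lists S"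
  by (auto simp: prefix_def iwords_def)

lemma equiv_refl: "equiv_states A x x" by (simp add: equiv_states_def)
lemma equiv_sym: "equiv_states A x y \<Longrightarrow> equiv_states A y x" by (simp add: equiv_states_def)
lemma equiv_trans: "equiv_states A x y \<Longrightarrow> equiv_states A y z \<Longrightarrow> equiv_states A x z"
  by (simp add: equiv_states_def)

locale red =
  fixes A :: "('q, 'a) tncw" and R :: "'q set" and h :: "'q \<Rightarrow> 'q"
  assumes wf: "wf_tncw A" and nc: "nice A"
    and R_sub: "R \<subseteq> states A" and hR: "\<And>x. x \<in> states A \<Longrightarrow> h x \<in> R"
    and H1: "\<And>x. x \<in> states A \<Longrightarrow> equiv_states A x (h x)"
    and H2: "\<And>x. x \<in> states A \<Longrightarrow> safe_lang_from A x \<subseteq> safe_lang_from (redA A R h) (h x)"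
    and H3: "\<And>p. p \<in> R \<Longrightarrow> safe_lang_from (redA A R h) p \<subseteq> lang_from A p"
begin

abbreviation "B \<equiv> redA A R h"

lemma B_simps[simp]: "alph B = alph A" "states B = R" "init B = h (init A)"
  "trans B p \<sigma> = {p' \<in> R. \<exists>t \<in> trans A p \<sigma>. equiv_states A t p'}"
  by (simp_all add: redA_def)

lemma acc_B: "acc B = {(p, \<sigma>, p'). p \<in> R \<and> \<sigma> \<in> alph A \<and> p' \<in> R \<and> (\<exists>t \<in> trans A p \<sigma>. equiv_states A t p')
              \<and> p' \<notin> h ` trans_nacc A p \<sigma>}"
  by (simp add: redA_def)

lemma sd: "safe_det A" "sem_det A" "normal A" using nc by (auto simp: nice_def)

lemma init_in: "init A \<in> states A" using wf by (simp add: wf_tncw_def)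

lemma trans_A_states: "p \<in> states A \<Longrightarrow> \<sigma> \<in> alph A \<Longrightarrow> trans A p \<sigma> \<subseteq> states A"
  using wf by (simp add: wf_tncw_def)

lemma trans_A_ne: "p \<in> states A \<Longrightarrow> \<sigma> \<in> alph A \<Longrightarrow> trans A p \<sigma> \<noteq> {}"
  using wf by (simp add: wf_tncw_def)

lemma Delta_B: "(p, \<sigma>, p') \<in> Delta B \<longleftrightarrow> p \<in> R \<and> \<sigma> \<in> alph A \<and> p' \<in> R \<and> (\<exists>t \<in> trans A p \<sigma>. equiv_states A t p')"
  by (auto simp: Delta_def)

lemma nacc_sub: "p \<in> states A \<Longrightarrow> trans_nacc A p \<sigma> \<subseteq> trans A p \<sigma> \<inter> states A"
  using wf by (auto simp: trans_nacc_def Delta_def wf_tncw_def)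

lemma safe_B: "(p, \<sigma>, p') \<in> Delta B - acc B \<longleftrightarrow> p \<in> R \<and> \<sigma> \<in> alph A \<and> p' \<in> h ` trans_nacc A p \<sigma>"
proof
  assume "(p, \<sigma>, p') \<in> Delta B - acc B"
  then have "(p, \<sigma>, p') \<in> Delta B" "(p, \<sigma>, p') \<notin> acc B" by auto
  then show "p \<in> R \<and> \<sigma> \<in> alph A \<and> p' \<in> h ` trans_nacc A p \<sigma>"
    by (simp add: Delta_B acc_B)
next
  assume a: "p \<in> R \<and> \<sigma> \<in> alph A \<and> p' \<in> h ` trans_nacc A p \<sigma>"
  then obtain t where t: "t \<in> trans_nacc A p \<sigma>" "p' = h t" by blast
  have pA: "p \<in> states A" using a R_sub by blast
  have "t \<in> trans A p \<sigma>" "t \<in> states A" using t(1) nacc_sub[OF pA] by blast+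
  then have "p' \<in> R" "equiv_states A t p'" using hR H1 t(2) by auto
  then have "(p, \<sigma>, p') \<in> Delta B" unfolding Delta_B using a \<open>t \<in> trans A p \<sigma>\<close> by blast
  moreover have "(p, \<sigma>, p') \<notin> acc B" unfolding acc_B using a by blast
  ultimately show "(p, \<sigma>, p') \<in> Delta B - acc B" by blast
qed

lemma wfB: "wf_tncw B"
proof -
  have "finite (alph A)" "finite (states A)" using wf by (auto simp: wf_tncw_def)
  moreover have "finite R" using R_sub calculation(2) by (rule finite_subset)
  moreover have "h (init A) \<in> R" using hR init_in by blast
  moreover have "trans B q \<sigma> \<noteq> {}" if qs: "q \<in> R" "\<sigma> \<in> alph A" for q \<sigma>
  proof -
    obtain t where "t \<in> trans A q \<sigma>" using trans_A_ne[of q \<sigma>] qs R_sub by blast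
    moreover then have "t \<in> states A" using trans_A_states[of q \<sigma>] qs R_sub by blast
    ultimately show ?thesis using hR H1 by auto
  qed
  moreover have "acc B \<subseteq> Delta B" unfolding acc_B by (auto simp: Delta_B)
  ultimately show ?thesis unfolding wf_tncw_def by auto
qed

lemma lang_B_sub: "lang B \<subseteq> lang A"
proof
  fix w assume "w \<in> lang B"
  then obtain r where w: "w \<in> iwords (alph A)" and r: "is_run_from B (h (init A)) w r" "accepting_run B w r"
    by (auto simp: lang_def)
  have hi: "h (init A) \<in> R" using hR init_in by blast
  have rR: "r i \<in> R" for i using run_in_states[OF wfB, of "h (init A)" w r i] hi w r(1) by simp
  obtain k where k: "\<forall>i\<in>{i. (r i, w i, r (Suc i)) \<in> acc B}. i < k"
    using r(2) unfolding accepting_run_def finite_nat_set_iff_bounded by blast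
  have "sfx w k \<in> safe_lang_from B (r k)"
  proof -
    have "is_run_from B (r k) (sfx w k) (\<lambda>i. r (k + i))" using r(1) by (simp add: is_run_from_def sfx_app)
    moreover have "\<forall>i. (r (k + i), w (k + i), r (Suc (k + i))) \<notin> acc B" using k by force
    then have "safe_run B (sfx w k) (\<lambda>i. r (k + i))" by (simp add: safe_run_def sfx_app)
    ultimately show ?thesis using iwords_sfx[OF w] by (auto simp: safe_lang_from_def)
  qed
  then have base: "sfx w k \<in> lang_from A (r k)" using H3[OF rR[of k]] by blast
  have back_step: "sfx w i \<in> lang_from A (r i)" if "sfx w (Suc i) \<in> lang_from A (r (Suc i))" for i
  proof -
    have wi: "w i \<in> alph A" using w by (simp add: iwords_def)
    have "r (Suc i) \<in> trans B (r i) (w i)" using r(1) by (simp add: is_run_from_def)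
    then obtain t where t: "t \<in> trans A (r i) (w i)" "equiv_states A t (r (Suc i))" by auto
    then have "sfx w (Suc i) \<in> lang_from A t" using that by (simp add: equiv_states_def)
    from lang_prepend[OF t(1) wi this] show ?thesis by (simp add: sfx_cons[symmetric])
  qed
  have "\<forall>d. d \<le> k \<longrightarrow> sfx w (k - d) \<in> lang_from A (r (k - d))"
  proof
    fix d show "d \<le> k \<longrightarrow> sfx w (k - d) \<in> lang_from A (r (k - d))"
    proof (induction d)
      case 0 then show ?case using base by simp
    next
      case (Suc d)
      show ?case
      proof
        assume "Suc d \<le> k"
        then have "Suc (k - Suc d) = k - d" by simp
        then show "sfx w (k - Suc d) \<in> lang_from A (r (k - Suc d))"
          using Suc \<open>Suc d \<le> k\<close> back_step[of "k - Suc d"] by simp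
      qed
    qed
  qed
  then have "w \<in> lang_from A (r 0)" by (metis diff_self_eq_0 order_refl sfx_0)
  moreover have "r 0 = h (init A)" using r(1) by (simp add: is_run_from_def)
  ultimately show "w \<in> lang A" using H1[OF init_in] by (simp add: lang_eq equiv_states_def)
qed

end




locale red_f = red +
  fixes f
  assumes f0: "f [] = h (init A)"
    and fD: "\<And>u \<sigma>. u \<in> lists (alph A) \<Longrightarrow> \<sigma> \<in> alph A \<Longrightarrow> (f u, \<sigma>, f (u @ [\<sigma>])) \<in> Delta A"
    and facc: "\<And>w. w \<in> lang A \<Longrightarrow> accepting_run A w (\<lambda>i. f (prefix w i))"
begin

definition g where "g u = gstr A h f (rev u)"

lemma g_Nil: "g [] = h (init A)" by (simp add: g_def)

lemma g_snoc: "g (u @ [\<sigma>]) = (if h ` trans_nacc A (g u) \<sigma> \<noteq> {}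
   then (SOME x. x \<in> h ` trans_nacc A (g u) \<sigma>) else h (f (u @ [\<sigma>])))"
  by (simp add: g_def)

lemma g_in_nacc: "h ` trans_nacc A (g u) \<sigma> \<noteq> {} \<Longrightarrow> g (u @ [\<sigma>]) \<in> h ` trans_nacc A (g u) \<sigma>"
  unfolding g_snoc by (simp add: some_in_eq)

lemma g_props: "u \<in> lists (alph A) \<Longrightarrow> g u \<in> R \<and> f u \<in> states A \<and> equiv_states A (g u) (f u)"
proof (induction u rule: rev_induct)
  case Nil
  have "h (init A) \<in> R" using hR init_in by blast
  then show ?case using R_sub by (auto simp: g_Nil f0 equiv_refl)
next
  case (snoc \<sigma> u)
  have u: "u \<in> lists (alph A)" and sig: "\<sigma> \<in> alph A" using snoc.prems by auto
  have IH: "g u \<in> R" "f u \<in> states A" "equiv_states A (g u) (f u)" using snoc.IH[OF u] by auto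
  have guA: "g u \<in> states A" using IH(1) R_sub by blast
  have fs: "f (u @ [\<sigma>]) \<in> trans A (f u) \<sigma>" using fD[OF u sig] by (simp add: Delta_def)
  then have fsA: "f (u @ [\<sigma>]) \<in> states A" using trans_A_states[OF IH(2) sig] by blast
  show ?case
  proof (cases "h ` trans_nacc A (g u) \<sigma> \<noteq> {}")
    case True
    then obtain t where t: "t \<in> trans_nacc A (g u) \<sigma>" "g (u @ [\<sigma>]) = h t" using g_in_nacc by blast
    have tA: "t \<in> trans A (g u) \<sigma>" "t \<in> states A" using t(1) nacc_sub[OF guA] by blast+
    have "equiv_states A t (f (u @ [\<sigma>]))"
      using res_equiv[OF sd(2) guA IH(2) IH(3) sig tA(1) fs] .
    then have "equiv_states A (h t) (f (u @ [\<sigma>]))" using H1[OF tA(2)] by (metis equiv_sym equiv_trans)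
    then show ?thesis using t(2) hR[OF tA(2)] fsA by simp
  next
    case False
    then have "g (u @ [\<sigma>]) = h (f (u @ [\<sigma>]))" by (simp add: g_snoc)
    then show ?thesis using hR[OF fsA] H1[OF fsA] fsA by (simp add: equiv_sym)
  qed
qed

lemma g_Delta:
  assumes u: "u \<in> lists (alph A)" and sig: "\<sigma> \<in> alph A"
  shows "(g u, \<sigma>, g (u @ [\<sigma>])) \<in> Delta B"
proof -
  have us: "u @ [\<sigma>] \<in> lists (alph A)" using u sig by simp
  have IH: "g u \<in> R" "f u \<in> states A" "equiv_states A (g u) (f u)" using g_props[OF u] by auto
  have IH2: "g (u @ [\<sigma>]) \<in> R" "equiv_states A (g (u @ [\<sigma>])) (f (u @ [\<sigma>]))" using g_props[OF us] by auto
  have guA: "g u \<in> states A" using IH(1) R_sub by blast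
  have fs: "f (u @ [\<sigma>]) \<in> trans A (f u) \<sigma>" using fD[OF u sig] by (simp add: Delta_def)
  obtain t where t: "t \<in> trans A (g u) \<sigma>" using trans_A_ne[OF guA sig] by blast
  have "equiv_states A t (f (u @ [\<sigma>]))" using res_equiv[OF sd(2) guA IH(2) IH(3) sig t fs] .
  then have "equiv_states A t (g (u @ [\<sigma>]))" using IH2(2) by (metis equiv_sym equiv_trans)
  then show ?thesis unfolding Delta_B using IH(1) sig IH2(1) t by blast
qed

lemma g_safe:
  assumes u: "u \<in> lists (alph A)" and sig: "\<sigma> \<in> alph A" and ne: "h ` trans_nacc A (g u) \<sigma> \<noteq> {}"
  shows "(g u, \<sigma>, g (u @ [\<sigma>])) \<notin> acc B"
proof -
  have "g u \<in> R" using g_props[OF u] by auto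
  then have "(g u, \<sigma>, g (u @ [\<sigma>])) \<in> Delta B - acc B" unfolding safe_B using sig g_in_nacc[OF ne] by blast
  then show ?thesis by blast
qed

lemma hnacc_unique:
  assumes "p \<in> R" "x \<in> h ` trans_nacc A p \<sigma>" "y \<in> h ` trans_nacc A p \<sigma>"
  shows "x = y"
proof -
  obtain t1 t2 where t: "t1 \<in> trans_nacc A p \<sigma>" "t2 \<in> trans_nacc A p \<sigma>" "x = h t1" "y = h t2"
    using assms(2,3) by blast
  have "t1 = t2" using safe_unique[OF wf sd(1)] t(1,2) unfolding trans_nacc_def by blast
  then show ?thesis using t by simp
qed

lemma sfx_sfx: "sfx (sfx w j) 1 = sfx w (Suc j)" "sfx (sfx w j) (Suc 0) = sfx w (Suc j)"
  by (rule ext, simp add: sfx_def)+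

lemma keep:
  assumes w: "w \<in> iwords (alph A)" and sl: "sfx w j \<in> safe_lang_from B (g (prefix w j))"
  shows "h ` trans_nacc A (g (prefix w j)) (w j) \<noteq> {}
    \<and> sfx w (Suc j) \<in> safe_lang_from B (g (prefix w (Suc j)))"
proof -
  let ?b = "g (prefix w j)"
  have bR: "?b \<in> R" using g_props[OF prefix_lists[OF w]] by auto
  have wj: "w j \<in> alph A" using w by (simp add: iwords_def)
  obtain \<rho> where rho: "is_run_from B ?b (sfx w j) \<rho>" "safe_run B (sfx w j) \<rho>" "sfx w j \<in> iwords (alph B)"
    using sl by (auto simp: safe_lang_from_def)
  have "\<rho> 1 \<in> trans B ?b (w j)" "(?b, w j, \<rho> 1) \<notin> acc B" using rho(1,2)
    unfolding is_run_from_def safe_run_def by (metis One_nat_def sfx_app add_0_right)+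
  then have "(?b, w j, \<rho> 1) \<in> Delta B - acc B" using bR wj by (simp add: Delta_def)
  then have r1: "\<rho> 1 \<in> h ` trans_nacc A ?b (w j)" unfolding safe_B by blast
  then have ne: "h ` trans_nacc A ?b (w j) \<noteq> {}" by blast
  have "g (prefix w (Suc j)) = \<rho> 1"
    using hnacc_unique[OF bR g_in_nacc[OF ne] r1] by (simp add: prefix_Suc)
  moreover have "sfx (sfx w j) 1 \<in> safe_lang_from B (\<rho> 1)" by (rule safe_lang_drop[OF rho])
  ultimately show ?thesis using ne by (simp add: sfx_sfx)
qed

lemma g_acc:
  assumes wl: "w \<in> lang A"
  shows "is_run_from B (h (init A)) w (\<lambda>i. g (prefix w i)) \<and> accepting_run B w (\<lambda>i. g (prefix w i))"
proof -
  have w: "w \<in> iwords (alph A)" using wl by (simp add: lang_def)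
  have wi: "w i \<in> alph A" for i using w by (simp add: iwords_def)
  have pl: "prefix w i \<in> lists (alph A)" for i using prefix_lists[OF w] .
  have run: "is_run_from B (h (init A)) w (\<lambda>i. g (prefix w i))"
    unfolding is_run_from_def
  proof (intro conjI allI)
    show "g (prefix w 0) = h (init A)" by (simp add: prefix_def g_Nil)
    fix i show "g (prefix w (Suc i)) \<in> trans B (g (prefix w i)) (w i)"
      using g_Delta[OF pl wi] by (simp add: prefix_Suc Delta_def)
  qed
  obtain k where k: "\<forall>i\<in>{i. (f (prefix w i), w i, f (prefix w (Suc i))) \<in> acc A}. i < k"
    using facc[OF wl] unfolding accepting_run_def finite_nat_set_iff_bounded by blast
  define J where "J = {i. h ` trans_nacc A (g (prefix w i)) (w i) = {}}"
  have accJ: "{i. (g (prefix w i), w i, g (prefix w (Suc i))) \<in> acc B} \<subseteq> J"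
  proof
    fix i assume "i \<in> {i. (g (prefix w i), w i, g (prefix w (Suc i))) \<in> acc B}"
    then have ia: "(g (prefix w i), w i, g (prefix w i @ [w i])) \<in> acc B" by (simp add: prefix_Suc)
    show "i \<in> J"
    proof (rule ccontr)
      assume "i \<notin> J"
      then have "h ` trans_nacc A (g (prefix w i)) (w i) \<noteq> {}" unfolding J_def by simp
      then show False using g_safe[OF pl wi] ia by blast
    qed
  qed
  have "finite J"
  proof (cases "\<exists>i0\<in>J. k \<le> i0")
    case True
    then obtain i0 where i0: "i0 \<in> J" "k \<le> i0" by blast
    let ?a = "\<lambda>i. f (prefix w i)"
    have aA: "?a i \<in> states A" for i using g_props[OF pl] by auto
    have "g (prefix w (Suc i0)) = h (?a (Suc i0))"
      using i0(1) unfolding J_def by (simp add: prefix_Suc g_snoc)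
    moreover have "sfx w (Suc i0) \<in> safe_lang_from A (?a (Suc i0))"
    proof -
      have "is_run_from A (?a (Suc i0)) (sfx w (Suc i0)) (\<lambda>j. ?a (Suc i0 + j))"
        unfolding is_run_from_def
      proof (intro conjI allI)
        fix j show "?a (Suc i0 + Suc j) \<in> trans A (?a (Suc i0 + j)) (sfx w (Suc i0) j)"
          using fD[OF pl wi, of "Suc i0 + j"] by (simp add: prefix_Suc Delta_def sfx_app)
      qed simp
      moreover have "safe_run A (sfx w (Suc i0)) (\<lambda>j. ?a (Suc i0 + j))"
        unfolding safe_run_def
      proof
        fix j have "\<not> (Suc i0 + j < k)" using i0(2) by simp
        then have "(?a (Suc i0 + j), w (Suc i0 + j), ?a (Suc (Suc i0 + j))) \<notin> acc A"
          using k by blast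
        then show "(?a (Suc i0 + j), sfx w (Suc i0) j, ?a (Suc i0 + Suc j)) \<notin> acc A"
          by (simp add: sfx_app)
      qed
      ultimately show ?thesis using iwords_sfx[OF w] by (auto simp: safe_lang_from_def)
    qed
    ultimately have base: "sfx w (Suc i0) \<in> safe_lang_from B (g (prefix w (Suc i0)))"
      using H2[OF aA[of "Suc i0"]] by auto
    have all: "sfx w (Suc i0 + d) \<in> safe_lang_from B (g (prefix w (Suc i0 + d)))" for d
    proof (induction d)
      case 0 then show ?case using base by simp
    next
      case (Suc d) then show ?case using keep[OF w] by simp
    qed
    have "J \<subseteq> {..i0}"
    proof
      fix j assume jJ: "j \<in> J"
      show "j \<in> {..i0}"
      proof (rule ccontr)
        assume "j \<notin> {..i0}"
        then have "j = Suc i0 + (j - Suc i0)" by simp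
        then obtain d where "j = Suc i0 + d" by blast
        then have "h ` trans_nacc A (g (prefix w j)) (w j) \<noteq> {}" using keep[OF w all[of d]] by simp
        then show False using jJ unfolding J_def by simp
      qed
    qed
    then show ?thesis by (rule finite_subset) simp
  next
    case False
    then have "J \<subseteq> {..<k}" by auto
    then show ?thesis by (rule finite_subset) simp
  qed
  have "accepting_run B w (\<lambda>i. g (prefix w i))"
    unfolding accepting_run_def using finite_subset[OF accJ \<open>finite J\<close>] by simp
  then show ?thesis using run by blast
qed

end




context red begin

lemma red_result: "wf_tncw B \<and> is_gfg B \<and> lang B = lang A"
proof -
  have hi: "h (init A) \<in> states A" using hR init_in R_sub by blast
  have "gfg_state A (h (init A))" using nc hi by (simp add: nice_def)
  then obtain f where f0: "f [] = h (init A)"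
    and fD: "\<forall>u \<in> lists (alph A). \<forall>\<sigma> \<in> alph A. (f u, \<sigma>, f (u @ [\<sigma>])) \<in> Delta A"
    and fa: "\<forall>w \<in> lang (A\<lparr>init := h (init A)\<rparr>). accepting_run A w (\<lambda>i. f (prefix w i))"
    unfolding gfg_state_def is_gfg_def by auto
  have "lang (A\<lparr>init := h (init A)\<rparr>) = lang_from A (h (init A))" by (simp add: lang_from_def)
  then have "lang (A\<lparr>init := h (init A)\<rparr>) = lang A"
    using H1[OF init_in] by (simp add: lang_eq equiv_states_def)
  then have fa': "\<And>w. w \<in> lang A \<Longrightarrow> accepting_run A w (\<lambda>i. f (prefix w i))" using fa by auto
  interpret rf: red_f A R h f
    by (unfold_locales) (use f0 fD fa' in auto)
  have sub: "lang A \<subseteq> lang B"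
  proof
    fix w assume wl: "w \<in> lang A"
    then have "w \<in> iwords (alph B)" by (simp add: lang_def)
    then show "w \<in> lang B" using rf.g_acc[OF wl] by (auto simp: lang_def)
  qed
  then have leq: "lang B = lang A" using lang_B_sub by blast
  have "is_gfg B" unfolding is_gfg_def
  proof (intro exI[of _ rf.g] conjI ballI)
    show "rf.g [] = init B" by (simp add: rf.g_Nil)
    fix u \<sigma> assume "u \<in> lists (alph B)" "\<sigma> \<in> alph B"
    then show "(rf.g u, \<sigma>, rf.g (u @ [\<sigma>])) \<in> Delta B" using rf.g_Delta by simp
  next
    fix w assume "w \<in> lang B"
    then show "accepting_run B w (\<lambda>i. rf.g (prefix w i))" using rf.g_acc leq by blast
  qed
  then show ?thesis using wfB leq by blast
qed

end

lemma rename_nat: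
  fixes B :: "('q, 'a) tncw"
  assumes wfB: "wf_tncw B" and gB: "is_gfg B"
  shows "\<exists>B' :: (nat, 'a) tncw. wf_tncw B' \<and> alph B' = alph B \<and> is_gfg B' \<and> lang B' = lang B
           \<and> card (states B') = card (states B)"
proof -
  let ?Q = "states B"
  have finQ: "finite ?Q" using wfB by (simp add: wf_tncw_def)
  obtain \<phi> :: "'q \<Rightarrow> nat" and n where "\<phi> ` ?Q = {i. i < n}" and inj: "inj_on \<phi> ?Q"
    using finite_imp_inj_to_nat_seg[OF finQ] by blast
  define \<psi> where "\<psi> = inv_into ?Q \<phi>"
  have psi: "x \<in> ?Q \<Longrightarrow> \<psi> (\<phi> x) = x" for x using inj by (simp add: \<psi>_def)
  have trQ: "x \<in> ?Q \<Longrightarrow> \<sigma> \<in> alph B \<Longrightarrow> trans B x \<sigma> \<subseteq> ?Q" for x \<sigma> using wfB by (simp add: wf_tncw_def)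
  have trne: "x \<in> ?Q \<Longrightarrow> \<sigma> \<in> alph B \<Longrightarrow> trans B x \<sigma> \<noteq> {}" for x \<sigma> using wfB by (simp add: wf_tncw_def)
  have accD: "acc B \<subseteq> Delta B" using wfB by (simp add: wf_tncw_def)
  define B' :: "(nat, 'a) tncw" where "B' = \<lparr>alph = alph B, states = \<phi> ` ?Q, init = \<phi> (init B),
     trans = (\<lambda>m \<sigma>. \<phi> ` trans B (\<psi> m) \<sigma>), acc = (\<lambda>(p, \<sigma>, p'). (\<phi> p, \<sigma>, \<phi> p')) ` acc B\<rparr>"
  have B'[simp]: "alph B' = alph B" "states B' = \<phi> ` ?Q" "init B' = \<phi> (init B)"
    "trans B' m \<sigma> = \<phi> ` trans B (\<psi> m) \<sigma>" "acc B' = (\<lambda>(p, \<sigma>, p'). (\<phi> p, \<sigma>, \<phi> p')) ` acc B"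
    for m \<sigma> by (simp_all add: B'_def)
  have accI: "(\<phi> x, \<sigma>, \<phi> y) \<in> acc B' \<longleftrightarrow> (x, \<sigma>, y) \<in> acc B" if "x \<in> ?Q" "y \<in> ?Q" for x y \<sigma>
  proof
    assume "(\<phi> x, \<sigma>, \<phi> y) \<in> acc B'"
    then obtain p p' where pp: "(p, \<sigma>, p') \<in> acc B" "\<phi> p = \<phi> x" "\<phi> p' = \<phi> y" by auto
    then have "(p, \<sigma>, p') \<in> Delta B" using accD by blast
    then have "p \<in> ?Q" "\<sigma> \<in> alph B" "p' \<in> trans B p \<sigma>" by (auto simp: Delta_def)
    then have "p \<in> ?Q" "p' \<in> ?Q" using trQ by auto
    then have "p = x" "p' = y" using pp(2,3) inj that by (auto dest: inj_onD)
    then show "(x, \<sigma>, y) \<in> acc B" using pp(1) by simp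
  next
    assume "(x, \<sigma>, y) \<in> acc B"
    then have "(\<lambda>(p, \<sigma>, p'). (\<phi> p, \<sigma>, \<phi> p')) (x, \<sigma>, y) \<in> (\<lambda>(p, \<sigma>, p'). (\<phi> p, \<sigma>, \<phi> p')) ` acc B"
      by (rule imageI)
    then show "(\<phi> x, \<sigma>, \<phi> y) \<in> acc B'" by simp
  qed
  have init_in: "init B \<in> ?Q" using wfB by (simp add: wf_tncw_def)
  have wfB': "wf_tncw B'" unfolding wf_tncw_def
  proof (intro conjI ballI)
    show "finite (alph B')" using wfB by (simp add: wf_tncw_def)
    show "finite (states B')" using finQ by simp
    show "init B' \<in> states B'" using init_in by simp
  next
    fix q \<sigma> assume q: "q \<in> states B'" and s: "\<sigma> \<in> alph B'"
    then obtain x where x: "x \<in> ?Q" "q = \<phi> x" by auto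
    have tq: "trans B' q \<sigma> = \<phi> ` trans B x \<sigma>" using x psi[OF x(1)] by (simp only: B'(4))
    have s': "\<sigma> \<in> alph B" using s by simp
    show "trans B' q \<sigma> \<subseteq> states B'" unfolding tq B'(2) using trQ[OF x(1) s'] by (rule image_mono)
    show "trans B' q \<sigma> \<noteq> {}" unfolding tq using trne[OF x(1) s'] by simp
  next
    show "acc B' \<subseteq> Delta B'"
    proof
      fix tr assume "tr \<in> acc B'"
      then obtain e where e: "e \<in> acc B" "tr = (\<lambda>(p, \<sigma>, p'). (\<phi> p, \<sigma>, \<phi> p')) e" by auto
      obtain p \<sigma> p' where ep: "e = (p, \<sigma>, p')" by (cases e) blast
      have "(p, \<sigma>, p') \<in> Delta B" using e(1) ep accD by blast
      then have pp: "p \<in> ?Q" "\<sigma> \<in> alph B" "p' \<in> trans B p \<sigma>" by (auto simp: Delta_def)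
      have "trans B' (\<phi> p) \<sigma> = \<phi> ` trans B p \<sigma>" using psi[OF pp(1)] by (simp only: B'(4))
      then have "\<phi> p' \<in> trans B' (\<phi> p) \<sigma>" using pp(3) by simp
      moreover have "tr = (\<phi> p, \<sigma>, \<phi> p')" using e(2) ep by simp
      ultimately show "tr \<in> Delta B'" using pp(1,2) by (simp add: Delta_def)
    qed
  qed
  have run_to: "is_run_from B' (\<phi> q) w (\<phi> \<circ> r) \<and> (accepting_run B' w (\<phi> \<circ> r) \<longleftrightarrow> accepting_run B w r)"
    if "q \<in> ?Q" "w \<in> iwords (alph B)" "is_run_from B q w r" for q w r
  proof -
    have rQ: "r i \<in> ?Q" for i using run_in_states[OF wfB that] .
    have "is_run_from B' (\<phi> q) w (\<phi> \<circ> r)" using that(3) by (auto simp: is_run_from_def psi rQ)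
    moreover have "{i. ((\<phi> \<circ> r) i, w i, (\<phi> \<circ> r) (Suc i)) \<in> acc B'} = {i. (r i, w i, r (Suc i)) \<in> acc B}"
      using accI rQ by auto
    ultimately show ?thesis by (simp add: accepting_run_def)
  qed
  have run_from: "is_run_from B q w (\<psi> \<circ> r') \<and> (accepting_run B w (\<psi> \<circ> r') \<longleftrightarrow> accepting_run B' w r')"
    if "q \<in> ?Q" "w \<in> iwords (alph B)" "is_run_from B' (\<phi> q) w r'" for q w r'
  proof -
    have wi: "w i \<in> alph B" for i using that(2) by (simp add: iwords_def)
    have rQ: "r' i \<in> \<phi> ` ?Q" for i using run_in_states[OF wfB', of "\<phi> q" w r' i] that by simp
    have psiQ: "\<psi> (r' i) \<in> ?Q" for i using rQ[of i] by (auto simp: psi)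
    have phipsi: "\<phi> (\<psi> (r' i)) = r' i" for i using rQ[of i] by (auto simp: psi)
    have step: "\<psi> (r' (Suc i)) \<in> trans B (\<psi> (r' i)) (w i)" for i
    proof -
      have "r' (Suc i) \<in> \<phi> ` trans B (\<psi> (r' i)) (w i)" using that(3) by (simp add: is_run_from_def)
      then obtain t where t: "t \<in> trans B (\<psi> (r' i)) (w i)" "r' (Suc i) = \<phi> t" by blast
      then have "t \<in> ?Q" using trQ[OF psiQ wi] by blast
      then show ?thesis using t by (simp add: psi)
    qed
    have "is_run_from B q w (\<psi> \<circ> r')" using that(1,3) step by (auto simp: is_run_from_def psi)
    moreover have "{i. ((\<psi> \<circ> r') i, w i, (\<psi> \<circ> r') (Suc i)) \<in> acc B} = {i. (r' i, w i, r' (Suc i)) \<in> acc B'}"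
      using accI[OF psiQ psiQ] phipsi by auto
    ultimately show ?thesis by (simp add: accepting_run_def)
  qed
  have lang_eq': "lang B' = lang B"
  proof
    show "lang B' \<subseteq> lang B"
    proof
      fix w assume "w \<in> lang B'"
      then obtain r' where w: "w \<in> iwords (alph B)" "is_run_from B' (\<phi> (init B)) w r'" "accepting_run B' w r'"
        by (auto simp: lang_def)
      then show "w \<in> lang B" using run_from[OF init_in w(1,2)] by (auto simp: lang_def)
    qed
  next
    show "lang B \<subseteq> lang B'"
    proof
      fix w assume "w \<in> lang B"
      then obtain r where w: "w \<in> iwords (alph B)" "is_run_from B (init B) w r" "accepting_run B w r"
        by (auto simp: lang_def)
      then show "w \<in> lang B'" using run_to[OF init_in w(1,2)] by (auto simp: lang_def)
    qed
  qed
  obtain f where f0: "f [] = init B"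
    and fD: "\<forall>u \<in> lists (alph B). \<forall>\<sigma> \<in> alph B. (f u, \<sigma>, f (u @ [\<sigma>])) \<in> Delta B"
    and fa: "\<forall>w \<in> lang B. accepting_run B w (\<lambda>i. f (prefix w i))"
    using gB unfolding is_gfg_def by blast
  have fQ: "u \<in> lists (alph B) \<Longrightarrow> f u \<in> ?Q" for u
  proof (induction u rule: rev_induct)
    case Nil then show ?case using f0 init_in by simp
  next
    case (snoc \<sigma> u)
    have u: "u \<in> lists (alph B)" "\<sigma> \<in> alph B" using snoc.prems by auto
    have "(f u, \<sigma>, f (u @ [\<sigma>])) \<in> Delta B" using fD u by blast
    then have "f (u @ [\<sigma>]) \<in> trans B (f u) \<sigma>" by (simp add: Delta_def)
    then show ?case using trQ[OF snoc.IH[OF u(1)] u(2)] by blast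
  qed
  have "is_gfg B'" unfolding is_gfg_def
  proof (intro exI[of _ "\<phi> \<circ> f"] conjI ballI)
    show "(\<phi> \<circ> f) [] = init B'" using f0 by simp
    fix u \<sigma> assume u: "u \<in> lists (alph B')" and s: "\<sigma> \<in> alph B'"
    then have "(f u, \<sigma>, f (u @ [\<sigma>])) \<in> Delta B" using fD by simp
    then have "f (u @ [\<sigma>]) \<in> trans B (f u) \<sigma>" "\<sigma> \<in> alph B" by (simp_all add: Delta_def)
    moreover have fu: "f u \<in> ?Q" using fQ u by simp
    moreover have "trans B' (\<phi> (f u)) \<sigma> = \<phi> ` trans B (f u) \<sigma>" using psi[OF fu] by simp
    ultimately show "((\<phi> \<circ> f) u, \<sigma>, (\<phi> \<circ> f) (u @ [\<sigma>])) \<in> Delta B'" by (simp add: Delta_def)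
  next
    fix w assume "w \<in> lang B'"
    then have wl: "w \<in> lang B" using lang_eq' by simp
    then have w: "w \<in> iwords (alph B)" by (simp add: lang_def)
    have "{i. ((\<phi> \<circ> f) (prefix w i), w i, (\<phi> \<circ> f) (prefix w (Suc i))) \<in> acc B'}
        = {i. (f (prefix w i), w i, f (prefix w (Suc i))) \<in> acc B}"
    proof (rule Collect_cong)
      fix i
      have "f (prefix w i) \<in> ?Q" "f (prefix w (Suc i)) \<in> ?Q" using fQ[OF prefix_lists[OF w]] by blast+
      from accI[OF this] show "(((\<phi> \<circ> f) (prefix w i), w i, (\<phi> \<circ> f) (prefix w (Suc i))) \<in> acc B')
         = ((f (prefix w i), w i, f (prefix w (Suc i))) \<in> acc B)" by simp
    qed
    then show "accepting_run B' w (\<lambda>i. (\<phi> \<circ> f) (prefix w i))"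
      using fa wl by (simp add: accepting_run_def)
  qed
  moreover have "card (states B') = card ?Q" using card_image[OF inj] by simp
  ultimately show ?thesis using wfB' lang_eq' by (intro exI[of _ B']) simp
qed

context red begin

lemma red_contra:
  assumes "R \<noteq> states A" "minimal_gfg A"
  shows False
proof -
  obtain B' :: "(nat, 'a) tncw" where B': "wf_tncw B'" "alph B' = alph A" "is_gfg B'" "lang B' = lang A"
     "card (states B') = card R"
    using rename_nat[of B] red_result by auto
  have "card (states A) \<le> card (states B')" using assms(2) B'(1-4) unfolding minimal_gfg_def by blast
  then have "card (states A) \<le> card R" using B'(5) by simp
  moreover have "finite (states A)" using wf by (simp add: wf_tncw_def)
  moreover have "R \<subset> states A" using R_sub assms(1) by blast
  ultimately have "card R < card (states A)" using psubset_card_mono by blast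
  then show False using \<open>card (states A) \<le> card R\<close> by simp
qed

end




lemma safe_redA:
  assumes wf: "wf_tncw A" and R_sub: "R \<subseteq> states A" and hR: "\<And>x. x \<in> states A \<Longrightarrow> h x \<in> R"
    and H1: "\<And>x. x \<in> states A \<Longrightarrow> equiv_states A x (h x)"
  shows "(p, \<sigma>, p') \<in> Delta (redA A R h) - acc (redA A R h) \<longleftrightarrow> p \<in> R \<and> \<sigma> \<in> alph A \<and> p' \<in> h ` trans_nacc A p \<sigma>"
proof
  assume "(p, \<sigma>, p') \<in> Delta (redA A R h) - acc (redA A R h)"
  then have "(p, \<sigma>, p') \<in> Delta (redA A R h)" "(p, \<sigma>, p') \<notin> acc (redA A R h)" by auto
  then show "p \<in> R \<and> \<sigma> \<in> alph A \<and> p' \<in> h ` trans_nacc A p \<sigma>"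
    by (simp add: Delta_def redA_def)
next
  assume a: "p \<in> R \<and> \<sigma> \<in> alph A \<and> p' \<in> h ` trans_nacc A p \<sigma>"
  then obtain t where t: "t \<in> trans_nacc A p \<sigma>" "p' = h t" by blast
  have "t \<in> trans A p \<sigma>" "t \<in> states A" using t(1) wf unfolding trans_nacc_def Delta_def wf_tncw_def by auto
  then have "p' \<in> R" "equiv_states A t p'" using hR H1 t(2) by auto
  then have "(p, \<sigma>, p') \<in> Delta (redA A R h)" using a \<open>t \<in> trans A p \<sigma>\<close> by (auto simp: Delta_def redA_def)
  moreover have "(p, \<sigma>, p') \<notin> acc (redA A R h)" using a by (simp add: redA_def)
  ultimately show "(p, \<sigma>, p') \<in> Delta (redA A R h) - acc (redA A R h)" by blast
qed

lemma safe_equiv_sym: "safe_equiv A x y \<Longrightarrow> safe_equiv A y x"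
  by (simp add: safe_equiv_def equiv_states_def)
lemma safe_equiv_trans: "safe_equiv A x y \<Longrightarrow> safe_equiv A y z \<Longrightarrow> safe_equiv A x z"
  by (simp add: safe_equiv_def equiv_states_def)

lemma run_step_in_Delta_B:
  assumes "is_run_from B p w r" "r i \<in> states B" "w \<in> iwords (alph B)"
  shows "(r i, w i, r (Suc i)) \<in> Delta B"
  using assms by (auto simp: Delta_def is_run_from_def iwords_def)

lemma track:
  assumes wf: "wf_tncw A" and nc: "nice A" and R_sub: "R \<subseteq> states A"
    and hR: "\<And>x. x \<in> states A \<Longrightarrow> h x \<in> R"
    and Hs: "\<And>x. x \<in> states A \<Longrightarrow> safe_equiv A x (h x)"
  shows "\<And>x. x \<in> states A \<Longrightarrow> safe_lang_from A x \<subseteq> safe_lang_from (redA A R h) (h x)"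
    and "\<And>p. p \<in> R \<Longrightarrow> safe_lang_from (redA A R h) p \<subseteq> safe_lang_from A p"
proof -
  let ?B = "redA A R h"
  have H1: "\<And>x. x \<in> states A \<Longrightarrow> equiv_states A x (h x)" using Hs by (simp add: safe_equiv_def)
  note sB = safe_redA[OF wf R_sub hR H1]
  have sdet: "safe_det A" using nc by (simp add: nice_def)
  have tQ: "p \<in> states A \<Longrightarrow> (p, \<sigma>, t) \<in> Delta A \<Longrightarrow> t \<in> states A" for p \<sigma> t
    using wf by (auto simp: Delta_def wf_tncw_def)
  show "safe_lang_from A x \<subseteq> safe_lang_from ?B (h x)" if xQ: "x \<in> states A" for x
  proof
    fix w assume "w \<in> safe_lang_from A x"
    then obtain r where w: "w \<in> iwords (alph A)" and r: "is_run_from A x w r" "safe_run A w r"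
      by (auto simp: safe_lang_from_def)
    have wi: "w i \<in> alph A" for i using w by (simp add: iwords_def)
    have rQ: "r i \<in> states A" for i using run_in_states[OF wf xQ w r(1)] .
    have redge: "(r i, w i, r (Suc i)) \<in> Delta A - acc A" for i
      using run_Delta[OF wf xQ w r(1)] r(2) by (simp add: safe_run_def)
    define b where "b = rec_nat (h x) (\<lambda>i bi. h (SOME t. (bi, w i, t) \<in> Delta A - acc A))"
    have b0: "b 0 = h x" and bS: "b (Suc i) = h (SOME t. (b i, w i, t) \<in> Delta A - acc A)" for i
      by (simp_all add: b_def)
    have inv: "b i \<in> R \<and> safe_equiv A (r i) (b i)" for i
    proof (induction i)
      case 0 then show ?case using hR[OF xQ] Hs[OF xQ] r(1) by (simp add: b0 is_run_from_def)
    next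
      case (Suc i)
      have biQ: "b i \<in> states A" using Suc R_sub by blast
      obtain y' where y': "(b i, w i, y') \<in> Delta A - acc A" "safe_equiv A (r (Suc i)) y'"
        using cong_safe[OF wf nc rQ biQ _ redge] Suc by blast
      have "(b i, w i, (SOME t. (b i, w i, t) \<in> Delta A - acc A)) \<in> Delta A - acc A"
        using y'(1) by (rule someI)
      then have "(SOME t. (b i, w i, t) \<in> Delta A - acc A) = y'" using safe_unique[OF wf sdet _ y'(1)] by blast
      then have bs: "b (Suc i) = h y'" by (simp add: bS)
      have y'Q: "y' \<in> states A" using tQ[OF biQ] y'(1) by blast
      show ?case using bs hR[OF y'Q] Hs[OF y'Q] y'(2) safe_equiv_trans by metis
    qed
    have bstep: "(b i, w i, b (Suc i)) \<in> Delta ?B - acc ?B" for i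
    proof -
      have biQ: "b i \<in> states A" using inv R_sub by blast
      obtain y' where y': "(b i, w i, y') \<in> Delta A - acc A"
        using cong_safe[OF wf nc rQ biQ _ redge] inv by blast
      have "(b i, w i, (SOME t. (b i, w i, t) \<in> Delta A - acc A)) \<in> Delta A - acc A"
        using y'(1) by (rule someI)
      then have "b (Suc i) \<in> h ` trans_nacc A (b i) (w i)" unfolding bS trans_nacc_def by blast
      moreover have "b i \<in> R" using inv[of i] by blast
      ultimately show ?thesis using wi[of i] sB by blast
    qed
    have "is_run_from ?B (h x) w b" using bstep b0 by (auto simp: is_run_from_def Delta_def)
    moreover have "safe_run ?B w b" using bstep by (auto simp: safe_run_def)
    ultimately show "w \<in> safe_lang_from ?B (h x)" using w by (auto simp: safe_lang_from_def redA_def)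
  qed
  show "safe_lang_from ?B p \<subseteq> safe_lang_from A p" if pR: "p \<in> R" for p
  proof
    fix w assume "w \<in> safe_lang_from ?B p"
    then obtain \<rho> where w: "w \<in> iwords (alph A)" and rho: "is_run_from ?B p w \<rho>" "safe_run ?B w \<rho>"
      by (auto simp: safe_lang_from_def redA_def)
    have wi: "w i \<in> alph A" for i using w by (simp add: iwords_def)
    have rhoR: "\<rho> i \<in> R" for i
    proof (induction i)
      case 0 then show ?case using rho(1) pR by (simp add: is_run_from_def)
    next
      case (Suc i)
      have "(\<rho> i, w i, \<rho> (Suc i)) \<in> Delta ?B"
        using rho(1) Suc wi by (simp add: Delta_def is_run_from_def redA_def)
      then have "(\<rho> i, w i, \<rho> (Suc i)) \<in> Delta ?B - acc ?B" using rho(2) by (simp add: safe_run_def)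
      then have "\<rho> (Suc i) \<in> h ` trans_nacc A (\<rho> i) (w i)" using sB by blast
      then obtain t where t: "t \<in> trans_nacc A (\<rho> i) (w i)" "\<rho> (Suc i) = h t" by blast
      have "t \<in> states A" using t(1) tQ Suc R_sub unfolding trans_nacc_def by blast
      then show ?case using t(2) hR by simp
    qed
    have rstep: "\<exists>t. (\<rho> i, w i, t) \<in> Delta A - acc A \<and> \<rho> (Suc i) = h t \<and> t \<in> states A" for i
    proof -
      have "(\<rho> i, w i, \<rho> (Suc i)) \<in> Delta ?B"
        using rho(1) rhoR wi by (simp add: Delta_def is_run_from_def redA_def)
      then have "(\<rho> i, w i, \<rho> (Suc i)) \<in> Delta ?B - acc ?B" using rho(2) by (simp add: safe_run_def)
      then have "\<rho> (Suc i) \<in> h ` trans_nacc A (\<rho> i) (w i)" using sB by blast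
      then obtain t where t: "t \<in> trans_nacc A (\<rho> i) (w i)" "\<rho> (Suc i) = h t" by blast
      moreover have "t \<in> states A" using t(1) tQ rhoR R_sub unfolding trans_nacc_def by blast
      ultimately show ?thesis unfolding trans_nacc_def by blast
    qed
    define a where "a = rec_nat p (\<lambda>i ai. SOME t. (ai, w i, t) \<in> Delta A - acc A)"
    have a0: "a 0 = p" and aS: "a (Suc i) = (SOME t. (a i, w i, t) \<in> Delta A - acc A)" for i
      by (simp_all add: a_def)
    have rhoQ: "\<rho> j \<in> states A" for j using rhoR R_sub by blast
    have nxt: "(a j, w j, a (Suc j)) \<in> Delta A - acc A \<and> (\<exists>t. \<rho> (Suc j) = h t \<and> t \<in> states A
        \<and> safe_equiv A t (a (Suc j)))"
      if ajQ: "a j \<in> states A" and eq: "safe_equiv A (\<rho> j) (a j)" for j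
    proof -
      obtain t where t: "(\<rho> j, w j, t) \<in> Delta A - acc A" "\<rho> (Suc j) = h t" "t \<in> states A"
        using rstep by blast
      obtain y' where y': "(a j, w j, y') \<in> Delta A - acc A" "safe_equiv A t y'"
        using cong_safe[OF wf nc rhoQ ajQ eq t(1)] by blast
      have e: "(a j, w j, a (Suc j)) \<in> Delta A - acc A" unfolding aS using y'(1) by (rule someI)
      then have "a (Suc j) = y'" using safe_unique[OF wf sdet _ y'(1)] by blast
      then show ?thesis using e t y'(2) by blast
    qed
    have inv: "a i \<in> states A \<and> safe_equiv A (\<rho> i) (a i)" for i
    proof (induction i)
      case 0
      show ?case using pR R_sub rho(1)
        by (auto simp: a0 is_run_from_def safe_equiv_def equiv_states_def)
    next
      case (Suc i)
      then have n: "(a i, w i, a (Suc i)) \<in> Delta A - acc A" and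
        "\<exists>t. \<rho> (Suc i) = h t \<and> t \<in> states A \<and> safe_equiv A t (a (Suc i))" using nxt by blast+
      then obtain t where t: "\<rho> (Suc i) = h t" "t \<in> states A" "safe_equiv A t (a (Suc i))" by blast
      have "a (Suc i) \<in> states A" using tQ n Suc by blast
      moreover have "safe_equiv A (\<rho> (Suc i)) (a (Suc i))"
        using t safe_equiv_trans safe_equiv_sym Hs by metis
      ultimately show ?case by blast
    qed
    have edges: "(a i, w i, a (Suc i)) \<in> Delta A - acc A" for i using nxt inv by blast
    have "is_run_from A p w a" using edges a0 by (auto simp: is_run_from_def Delta_def)
    moreover have "safe_run A w a" using edges by (auto simp: safe_run_def)
    ultimately show "w \<in> safe_lang_from A p" using w by (auto simp: safe_lang_from_def)
  qed
qed




lemma safe_transfer: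
  assumes RA: "R \<subseteq> states A" and al: "alph B = alph A"
    and tr: "\<And>p \<sigma> p'. p \<in> R \<Longrightarrow> (p, \<sigma>, p') \<in> Delta A - acc A \<Longrightarrow> (p, \<sigma>, p') \<in> Delta B - acc B \<and> p' \<in> R"
    and pR: "p \<in> R" and w: "w \<in> safe_lang_from A p"
  shows "w \<in> safe_lang_from B p"
proof -
  obtain r where wi: "w \<in> iwords (alph A)" and r: "is_run_from A p w r" "safe_run A w r"
    using w by (auto simp: safe_lang_from_def)
  have wa: "w i \<in> alph A" for i using wi by (simp add: iwords_def)
  have stepA: "(r i, w i, r (Suc i)) \<in> Delta A - acc A" if "r i \<in> R" for i
    using that RA wa[of i] r by (auto simp: Delta_def is_run_from_def safe_run_def)
  have rR: "r i \<in> R" for i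
  proof (induction i)
    case 0 then show ?case using r(1) pR by (simp add: is_run_from_def)
  next
    case (Suc i) then show ?case using tr[OF Suc stepA[OF Suc]] by blast
  qed
  have stepB: "(r i, w i, r (Suc i)) \<in> Delta B - acc B" for i using tr[OF rR stepA[OF rR]] by blast
  have "is_run_from B p w r" using stepB r(1) by (auto simp: is_run_from_def Delta_def)
  moreover have "safe_run B w r" using stepB by (auto simp: safe_run_def)
  ultimately show ?thesis using wi al by (auto simp: safe_lang_from_def)
qed

lemma reach_dom:
  assumes wf: "wf_tncw A" and nc: "nice A" and qQ: "q \<in> states A" and sQ: "s \<in> states A"
    and le: "safe_le A q s" and qx: "(q, x) \<in> (safe_edges A)\<^sup>*"
  shows "\<exists>s'. s' \<in> states A \<and> (s, s') \<in> (safe_edges A)\<^sup>* \<and> equiv_states A x s'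
     \<and> safe_lang_from A x \<subseteq> safe_lang_from A s'"
  using qx
proof (induction rule: rtrancl_induct)
  case base
  then show ?case using sQ le by (auto simp: safe_le_def)
next
  case (step y z)
  have n: "normal A" "safe_det A" "sem_det A" using nc by (auto simp: nice_def)
  obtain sy where sy: "sy \<in> states A" "(s, sy) \<in> (safe_edges A)\<^sup>*" "equiv_states A y sy"
    "safe_lang_from A y \<subseteq> safe_lang_from A sy" using step.IH by blast
  obtain \<sigma> where e: "(y, \<sigma>, z) \<in> Delta A - acc A" using step.hyps(2) by (auto simp: safe_edges_def)
  have yQ: "y \<in> states A" "\<sigma> \<in> alph A" "z \<in> trans A y \<sigma>" using e by (auto simp: Delta_def)
  have ne: "safe_lang_from A z \<noteq> {}" using safe_edge_nonempty[OF wf n(1) e] by simp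
  obtain sz where sz: "(sy, \<sigma>, sz) \<in> Delta A - acc A" "safe_lang_from A z \<subseteq> safe_lang_from A sz"
    using step_safe[OF wf n(2) sy(1) sy(4) e ne] by blast
  have szt: "sz \<in> trans A sy \<sigma>" using sz(1) by (auto simp: Delta_def)
  have "sz \<in> states A" using szt sy(1) yQ(2) wf by (auto simp: wf_tncw_def)
  moreover have "(s, sz) \<in> (safe_edges A)\<^sup>*" using sy(2) sz(1)
    by (auto simp: safe_edges_def intro: rtrancl_into_rtrancl)
  moreover have "equiv_states A z sz" using res_equiv[OF n(3) yQ(1) sy(1) sy(3) yQ(2) yQ(3) szt] .
  ultimately show ?case using sz(2) by blast
qed

lemma safe_minimal_thm:
  assumes wf: "wf_tncw A" and nc: "nice A" and mn: "minimal_gfg A"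
  shows "safe_minimal A"
  unfolding safe_minimal_def
proof (intro ballI impI)
  fix q s assume qQ: "q \<in> states A" and sQ: "s \<in> states A" and eq: "safe_equiv A q s"
  show "q = s"
  proof (rule ccontr)
    assume qs: "q \<noteq> s"
    define R where "R = states A - {q}"
    define h where "h x = (if x = q then s else x)" for x
    have R_sub: "R \<subseteq> states A" by (auto simp: R_def)
    have hR: "h x \<in> R" if "x \<in> states A" for x using that sQ qs by (auto simp: h_def R_def)
    have Hs: "safe_equiv A x (h x)" if "x \<in> states A" for x
      using eq by (auto simp: h_def safe_equiv_def equiv_states_def)
    have H1: "equiv_states A x (h x)" if "x \<in> states A" for x using Hs[OF that] by (simp add: safe_equiv_def)
    note T = track[OF wf nc R_sub hR Hs]
    interpret red A R h
    proof (unfold_locales)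
      show "wf_tncw A" "nice A" "R \<subseteq> states A" by (fact wf, fact nc, fact R_sub)
      show "\<And>x. x \<in> states A \<Longrightarrow> h x \<in> R" by (fact hR)
      show "\<And>x. x \<in> states A \<Longrightarrow> equiv_states A x (h x)" by (fact H1)
      show "\<And>x. x \<in> states A \<Longrightarrow> safe_lang_from A x \<subseteq> safe_lang_from (redA A R h) (h x)" using T(1) by blast
      show "safe_lang_from (redA A R h) p \<subseteq> lang_from A p" if pR: "p \<in> R" for p
      proof -
        have "safe_lang_from (redA A R h) p \<subseteq> safe_lang_from A p" by (rule T(2)) (simp_all add: pR)
        then show ?thesis using safe_sub_lang[of A p] by (rule order_trans)
      qed
    qed
    have "R \<noteq> states A" using qQ by (auto simp: R_def)
    then show False by (rule red_contra[OF _ mn])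
  qed
qed

lemma safe_centralized_thm:
  assumes wf: "wf_tncw A" and nc: "nice A" and mn: "minimal_gfg A"
  shows "safe_centralized A"
  unfolding safe_centralized_def
proof (intro ballI impI)
  fix q s assume qQ: "q \<in> states A" and sQ: "s \<in> states A" and le: "safe_le A q s"
  show "same_safe_comp A q s"
  proof (rule ccontr)
    assume nsc: "\<not> same_safe_comp A q s"
    have n: "normal A" using nc by (simp add: nice_def)
    let ?S = "safe_edges A"
    define T where "T = {x \<in> states A. same_safe_comp A q x}"
    define R where "R = states A - T"
    define P where "P x y \<longleftrightarrow> y \<in> R \<and> equiv_states A x y \<and> safe_lang_from A x \<subseteq> safe_lang_from A y" for x y
    define h where "h x = (if x \<in> T then (SOME y. P x y) else x)" for x
    have R_sub: "R \<subseteq> states A" by (auto simp: R_def)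
    have exP: "\<exists>y. P x y" if xT: "x \<in> T" for x
    proof -
      have "(q, x) \<in> ?S\<^sup>*" using xT by (simp add: T_def same_safe_comp_def)
      then obtain s' where s': "s' \<in> states A" "(s, s') \<in> ?S\<^sup>*" "equiv_states A x s'"
        "safe_lang_from A x \<subseteq> safe_lang_from A s'" using reach_dom[OF wf nc qQ sQ le] by blast
      have "s' \<notin> T"
      proof
        assume "s' \<in> T"
        then have "(s', q) \<in> ?S\<^sup>*" by (simp add: T_def same_safe_comp_def)
        then have "(s, q) \<in> ?S\<^sup>*" using s'(2) by auto
        then have "(q, s) \<in> ?S\<^sup>*" using n sQ qQ unfolding normal_def by blast
        then show False using nsc \<open>(s, q) \<in> ?S\<^sup>*\<close> by (simp add: same_safe_comp_def)
      qed
      then have "P x s'" using s' by (simp add: P_def R_def)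
      then show ?thesis by blast
    qed
    have hP: "h x \<in> R \<and> equiv_states A x (h x) \<and> safe_lang_from A x \<subseteq> safe_lang_from A (h x)"
      if xQ: "x \<in> states A" for x
    proof (cases "x \<in> T")
      case True
      then have "P x (h x)" using someI_ex[OF exP[OF True]] by (simp add: h_def)
      then show ?thesis by (simp add: P_def)
    next
      case False
      then show ?thesis using xQ by (simp add: h_def R_def equiv_states_def)
    qed
    have hid: "h x = x" if "x \<in> R" for x using that by (simp add: h_def R_def)
    have hR: "\<And>x. x \<in> states A \<Longrightarrow> h x \<in> R" using hP by blast
    have H1: "\<And>x. x \<in> states A \<Longrightarrow> equiv_states A x (h x)" using hP by blast
    note sB = safe_redA[OF wf R_sub hR H1]
    have clos: "p' \<in> R" if pR: "p \<in> R" and e: "(p, \<sigma>, p') \<in> Delta A - acc A" for p \<sigma> p'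
    proof -
      have p'Q: "p' \<in> states A" using e wf by (auto simp: Delta_def wf_tncw_def)
      have pp': "(p, p') \<in> ?S" using e by (auto simp: safe_edges_def)
      show ?thesis
      proof (rule ccontr)
        assume "p' \<notin> R"
        then have "p' \<in> T" using p'Q by (simp add: R_def)
        then have qp': "(q, p') \<in> ?S\<^sup>*" "(p', q) \<in> ?S\<^sup>*" by (auto simp: T_def same_safe_comp_def)
        then have "(p, q) \<in> ?S\<^sup>*" using pp' by auto
        moreover have pQ: "p \<in> states A" using pR R_sub by blast
        ultimately have "(q, p) \<in> ?S\<^sup>*" using n qQ unfolding normal_def by blast
        then have "p \<in> T" using pQ \<open>(p, q) \<in> ?S\<^sup>*\<close> by (simp add: T_def same_safe_comp_def)
        then show False using pR by (simp add: R_def)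
      qed
    qed
    have AtoB: "(p, \<sigma>, p') \<in> Delta (redA A R h) - acc (redA A R h) \<and> p' \<in> R"
      if pR: "p \<in> R" and e: "(p, \<sigma>, p') \<in> Delta A - acc A" for p \<sigma> p'
    proof -
      have "p' \<in> R" using clos[OF pR e] .
      moreover have "\<sigma> \<in> alph A" using e by (simp add: Delta_def)
      moreover have "p' \<in> h ` trans_nacc A p \<sigma>" using e hid[OF \<open>p' \<in> R\<close>]
        by (auto simp: trans_nacc_def intro: image_eqI[of _ _ p'])
      ultimately show ?thesis using pR sB by blast
    qed
    have BtoA: "(p, \<sigma>, p') \<in> Delta A - acc A \<and> p' \<in> R"
      if pR: "p \<in> R" and e: "(p, \<sigma>, p') \<in> Delta (redA A R h) - acc (redA A R h)" for p \<sigma> p'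
    proof -
      have "p' \<in> h ` trans_nacc A p \<sigma>" using e sB by blast
      then obtain t where t: "t \<in> trans_nacc A p \<sigma>" "p' = h t" by blast
      then have te: "(p, \<sigma>, t) \<in> Delta A - acc A" by (simp add: trans_nacc_def)
      then have "t \<in> R" using clos[OF pR] by blast
      then show ?thesis using te t(2) hid by simp
    qed
    have eqL: "safe_lang_from (redA A R h) p = safe_lang_from A p" if pR: "p \<in> R" for p
    proof
      have s1: "R \<subseteq> states (redA A R h)" by (simp add: redA_def)
      have s2: "alph A = alph (redA A R h)" "alph (redA A R h) = alph A" by (simp_all add: redA_def)
      show "safe_lang_from (redA A R h) p \<subseteq> safe_lang_from A p"
      proof
        fix w assume w: "w \<in> safe_lang_from (redA A R h) p"
        show "w \<in> safe_lang_from A p" by (rule safe_transfer[OF s1 s2(1) BtoA pR w])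
      qed
      show "safe_lang_from A p \<subseteq> safe_lang_from (redA A R h) p"
      proof
        fix w assume w: "w \<in> safe_lang_from A p"
        show "w \<in> safe_lang_from (redA A R h) p" by (rule safe_transfer[OF R_sub s2(2) AtoB pR w])
      qed
    qed
    interpret red A R h
    proof (unfold_locales)
      show "wf_tncw A" "nice A" "R \<subseteq> states A" by (fact wf, fact nc, fact R_sub)
      show "\<And>x. x \<in> states A \<Longrightarrow> h x \<in> R" by (fact hR)
      show "\<And>x. x \<in> states A \<Longrightarrow> equiv_states A x (h x)" by (fact H1)
      show "safe_lang_from A x \<subseteq> safe_lang_from (redA A R h) (h x)" if xQ: "x \<in> states A" for x
      proof -
        have hx: "h x \<in> R" using hR[OF xQ] .
        have "safe_lang_from A x \<subseteq> safe_lang_from A (h x)" using hP[OF xQ] by blast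
        then show ?thesis using eqL[OF hx] by simp
      qed
      show "safe_lang_from (redA A R h) p \<subseteq> lang_from A p" if pR: "p \<in> R" for p
        using eqL[OF pR] safe_sub_lang[of A p] by simp
    qed
    have "q \<in> T" using qQ by (simp add: T_def same_safe_comp_def)
    then have "R \<noteq> states A" using qQ by (auto simp: R_def)
    then show False by (rule red_contra[OF _ mn])
  qed
qed

theorem mainTheorem1:
  fixes A :: "('q, 'a) tncw"
  assumes "wf_tncw A" and "is_gfg A" and "nice A" and "minimal_gfg A"
  shows "safe_centralized A \<and> safe_minimal A"
  using safe_centralized_thm[OF assms(1,3,4)] safe_minimal_thm[OF assms(1,3,4)] by blast



end
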